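(* Let $m\geq 3$ and $n\geq 2$, and let $L_{m,n}$ be the lollipop graph. Then $\mathrm{ldim}_f(L_{m,n})=\frac{m}{2}$.
   Context: The lollipop graph $L_{m,n}$ is obtained from a complete graph $K_m$ and a path $P_n$ (on $n$ vertices), disjoint, by adding one edge joining a vertex of $K_m$ to an end vertex of $P_n$. For a connected graph $G$ and edge $uv$, $L(uv)=\{x\in V(G): d(u,x)\neq d(v,x)\}$ ($d$ the shortest-path distance). A function $f:V(G)\to[0,1]$ is a local resolving function if $\sum_{x\in L(uv)}f(x)\geq 1$ for every edge $uv$; $\mathrm{ldim}_f(G)$ is the minimum of $\sum_{v}f(v)$ over all local resolving functions. *)

theory Defs
  imports Complex_Main
begin

text \<open>A (simple) graph is given by a vertex set V and a symmetric irreflexive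
adjacency relation E on V.\<close>

definition has_walk :: "('a \<Rightarrow> 'a \<Rightarrow> bool) \<Rightarrow> 'a \<Rightarrow> 'a \<Rightarrow> nat \<Rightarrow> bool" where
  "has_walk E u v k \<longleftrightarrow> (\<exists>p. length p = Suc k \<and> hd p = u \<and> last p = v \<and>
      (\<forall>i<k. E (p ! i) (p ! Suc i)))"

text \<open>Shortest-path distance (for connected graphs).\<close>
definition gdist :: "('a \<Rightarrow> 'a \<Rightarrow> bool) \<Rightarrow> 'a \<Rightarrow> 'a \<Rightarrow> nat" where
  "gdist E u v = (LEAST k. has_walk E u v k)"

definition Lset :: "'a set \<Rightarrow> ('a \<Rightarrow> 'a \<Rightarrow> bool) \<Rightarrow> 'a \<Rightarrow> 'a \<Rightarrow> 'a set" where
  "Lset V E u v = {x \<in> V. gdist E u x \<noteq> gdist E v x}"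

definition local_resolving_function ::
  "'a set \<Rightarrow> ('a \<Rightarrow> 'a \<Rightarrow> bool) \<Rightarrow> ('a \<Rightarrow> real) \<Rightarrow> bool" where
  "local_resolving_function V E f \<longleftrightarrow>
     (\<forall>x\<in>V. 0 \<le> f x \<and> f x \<le> 1) \<and>
     (\<forall>u\<in>V. \<forall>v\<in>V. E u v \<longrightarrow> (\<Sum>x\<in>Lset V E u v. f x) \<ge> 1)"

definition ldim_f :: "'a set \<Rightarrow> ('a \<Rightarrow> 'a \<Rightarrow> bool) \<Rightarrow> real" where
  "ldim_f V E = Inf {(\<Sum>x\<in>V. f x) | f. local_resolving_function V E f}"

text \<open>Lollipop graph L_{m,n}: vertices 0..m+n-1; 0..m-1 form K_m,
  m..m+n-1 form the path P_n, and vertex m-1 of K_m is joined to the end m of the path.\<close>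
definition lollipop_V :: "nat \<Rightarrow> nat \<Rightarrow> nat set" where
  "lollipop_V m n = {0..<m+n}"

definition lollipop_E :: "nat \<Rightarrow> nat \<Rightarrow> nat \<Rightarrow> nat \<Rightarrow> bool" where
  "lollipop_E m n x y \<longleftrightarrow> x \<noteq> y \<and> x < m + n \<and> y < m + n \<and>
     ((x < m \<and> y < m) \<or> (max x y \<ge> m \<and> (x = y + 1 \<or> y = x + 1)))"

end

theory Submission
  imports Defs
begin

lemma walk_single: "has_walk E a a 0"
  unfolding has_walk_def by (intro exI[of _ "[a]"]) auto

lemma walk_cons:
  assumes "E a b" "has_walk E b c k" shows "has_walk E a c (Suc k)"
proof -
  obtain p where p: "length p = Suc k" "hd p = b" "last p = c" "\<forall>i<k. E (p ! i) (p ! Suc i)"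
    using assms(2) unfolding has_walk_def by blast
  have ne: "p \<noteq> []" using p(1) by auto
  have "\<forall>i<Suc k. E ((a#p) ! i) ((a#p) ! Suc i)"
  proof (intro allI impI)
    fix i assume "i < Suc k"
    then show "E ((a#p) ! i) ((a#p) ! Suc i)"
      using p ne assms(1) by (cases i) (auto simp: hd_conv_nth)
  qed
  then show ?thesis unfolding has_walk_def using p ne
    by (intro exI[of _ "a#p"]) auto
qed

lemma walk0: "has_walk E a b 0 \<Longrightarrow> a = b"
  unfolding has_walk_def by (auto simp: length_Suc_conv)

lemma gdist_le: "has_walk E a b k \<Longrightarrow> gdist E a b \<le> k"
  unfolding gdist_def by (rule Least_le)

lemma gdist_walk: "has_walk E a b k \<Longrightarrow> has_walk E a b (gdist E a b)"
  unfolding gdist_def by (rule LeastI)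

lemma gdist_refl: "gdist E a a = 0"
  using gdist_le[OF walk_single, of E a] by simp

lemma gdist_adj: assumes "E a b" "a \<noteq> b" shows "gdist E a b = 1"
proof -
  have w: "has_walk E a b 1" using walk_cons[OF assms(1) walk_single[of E b]] by simp
  have "gdist E a b \<le> 1" using gdist_le[OF w] .
  moreover have "gdist E a b \<noteq> 0"
    using gdist_walk[OF w] walk0[of E a b] assms(2) by (metis)
  ultimately show ?thesis by linarith
qed

lemma walk_pot:
  assumes "has_walk E a b k" "\<And>y z. E y z \<Longrightarrow> \<phi> y \<le> \<phi> z + (1::nat)"
  shows "\<phi> a \<le> \<phi> b + k"
proof -
  obtain p where p: "length p = Suc k" "hd p = a" "last p = b" "\<forall>i<k. E (p ! i) (p ! Suc i)"
    using assms(1) unfolding has_walk_def by blast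
  have "\<forall>i\<le>k. \<phi> (p!0) \<le> \<phi> (p!i) + i"
  proof (intro allI impI)
    fix i show "i \<le> k \<Longrightarrow> \<phi> (p!0) \<le> \<phi> (p!i) + i"
    proof (induction i)
      case 0 then show ?case by simp
    next
      case (Suc i)
      then have "\<phi> (p!i) \<le> \<phi> (p!Suc i) + 1" using p(4) assms(2) by simp
      then show ?case using Suc by simp
    qed
  qed
  then have "\<phi> (p!0) \<le> \<phi> (p!k) + k" by simp
  moreover have "p!0 = a"
  proof -
    have "p \<noteq> []" using p(1) by auto
    then show ?thesis using p(2) by (simp add: hd_conv_nth)
  qed
  moreover have "p!k = b"
  proof -
    have "p \<noteq> []" using p(1) by auto
    then show ?thesis using p(1,3) by (simp add: last_conv_nth)
  qed
  ultimately show ?thesis by simp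
qed

lemma walk_map:
  assumes "has_walk E a b k" "\<And>y z. E y z \<Longrightarrow> E (\<sigma> y) (\<sigma> z)"
  shows "has_walk E (\<sigma> a) (\<sigma> b) k"
proof -
  obtain p where p: "length p = Suc k" "hd p = a" "last p = b" "\<forall>i<k. E (p ! i) (p ! Suc i)"
    using assms(1) unfolding has_walk_def by blast
  have ne: "p \<noteq> []" using p(1) by auto
  show ?thesis unfolding has_walk_def
    using p ne assms(2) by (intro exI[of _ "map \<sigma> p"]) (auto simp: hd_map last_map)
qed

lemma gdist_aut:
  assumes "\<And>y z. E y z \<Longrightarrow> E (\<sigma> y) (\<sigma> z)" "\<And>y. \<sigma> (\<sigma> y) = y"
  shows "gdist E (\<sigma> a) (\<sigma> b) = gdist E a b"
proof -
  have "\<And>k. has_walk E (\<sigma> a) (\<sigma> b) k = has_walk E a b k"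
    using walk_map[of E _ _ _ \<sigma>, OF _ assms(1)] assms(2) by metis
  then have "has_walk E (\<sigma> a) (\<sigma> b) = has_walk E a b" by (rule ext)
  then show ?thesis unfolding gdist_def by simp
qed

lemma lol_sym: "lollipop_E m n x y = lollipop_E m n y x"
  unfolding lollipop_E_def by (auto simp: max.commute)

lemma lol_swap:
  assumes "u < m - 1" "v < m - 1" "lollipop_E m n y z"
  shows "lollipop_E m n ((\<lambda>x. if x = u then v else if x = v then u else x) y)
                       ((\<lambda>x. if x = u then v else if x = v then u else x) z)"
  using assms unfolding lollipop_E_def by auto

lemma path_walk:
  assumes "m \<ge> 1" "x < m - 1" "m - 1 + j < m + n"
  shows "has_walk (lollipop_E m n) (m - 1 + j) x (Suc j)"
  using assms(3)
proof (induction j)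
  case 0
  have "lollipop_E m n (m - 1) x" using assms unfolding lollipop_E_def by auto
  then show ?case using walk_cons[OF _ walk_single[of _ x]] by simp
next
  case (Suc j)
  have "lollipop_E m n (m - 1 + Suc j) (m - 1 + j)"
    using Suc.prems assms unfolding lollipop_E_def by auto
  then show ?case using walk_cons Suc by simp
qed

lemma lol_pot:
  assumes "m \<ge> 1" "lollipop_E m n y z"
  shows "(\<lambda>y. if y < m - 1 then 0 else y + 2 - m) y \<le> (\<lambda>y. if y < m - 1 then 0 else y + 2 - m) z + (1::nat)"
  using assms unfolding lollipop_E_def by auto

lemma path_dist_ne:
  assumes "m \<ge> 3" "x < m - 1" "m + j < m + n"
  shows "gdist (lollipop_E m n) (m - 1 + j) x \<noteq> gdist (lollipop_E m n) (m + j) x"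
proof -
  have w1: "has_walk (lollipop_E m n) (m - 1 + j) x (Suc j)"
    using path_walk[of m x j n] assms by simp
  have w2: "has_walk (lollipop_E m n) (m + j) x (Suc (Suc j))"
    using path_walk[of m x "Suc j" n] assms by simp
  have g1: "gdist (lollipop_E m n) (m - 1 + j) x \<le> Suc j" using gdist_le[OF w1] .
  have "(\<lambda>y. if y < m - 1 then 0 else y + 2 - m) (m + j) \<le>
      (\<lambda>y. if y < m - 1 then 0 else y + 2 - m) x + gdist (lollipop_E m n) (m + j) x"
    by (rule walk_pot[OF gdist_walk[OF w2]]) (rule lol_pot, use assms in auto)
  moreover have "\<not> (m + j < m - 1)" by simp
  moreover have "m + j + 2 - m = Suc (Suc j)" by simp
  ultimately have "Suc (Suc j) \<le> gdist (lollipop_E m n) (m + j) x" using assms by simp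
  then show ?thesis using g1 by linarith
qed

lemma Lset_sym: "Lset V E u v = Lset V E v u"
  unfolding Lset_def by auto

lemma path_edge_L:
  assumes "m \<ge> 3" "a \<ge> m - 1" "a + 1 < m + n"
  shows "{0, 1} \<subseteq> Lset (lollipop_V m n) (lollipop_E m n) a (a + 1)"
proof -
  obtain j where j: "a = m - 1 + j" using assms(2) by (metis le_add_diff_inverse)
  have a1: "a + 1 = m + j" using j assms(1) by simp
  have "m + j < m + n" using a1 assms by simp
  then have "\<And>x. x < m - 1 \<Longrightarrow> gdist (lollipop_E m n) a x \<noteq> gdist (lollipop_E m n) (a+1) x"
    using path_dist_ne[OF assms(1)] j a1 by metis
  then show ?thesis using assms(1) unfolding Lset_def lollipop_V_def by auto
qed

lemma upper:
  assumes "m \<ge> 3"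
  shows "local_resolving_function (lollipop_V m n) (lollipop_E m n) (\<lambda>x. if x < m then 1/2 else 0)"
  unfolding local_resolving_function_def
proof (intro conjI ballI impI)
  fix x show "0 \<le> (if x < m then 1/2 else 0::real)" by simp
  show "(if x < m then 1/2 else 0::real) \<le> 1" by simp
next
  fix u v assume uv: "u \<in> lollipop_V m n" "v \<in> lollipop_V m n" "lollipop_E m n u v"
  let ?g = "\<lambda>x. if x < m then 1/2 else 0::real"
  let ?L = "Lset (lollipop_V m n) (lollipop_E m n) u v"
  have fin: "finite ?L" unfolding Lset_def lollipop_V_def by auto
  have mono: "S \<subseteq> ?L \<Longrightarrow> sum ?g S \<le> sum ?g ?L" for S
    by (rule sum_mono2[OF fin]) auto
  show "1 \<le> sum ?g ?L"
  proof (cases "u < m \<and> v < m")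
    case True
    have ne: "u \<noteq> v" using uv(3) unfolding lollipop_E_def by auto
    have vu: "lollipop_E m n v u" using uv(3) lol_sym by metis
    have "{u, v} \<subseteq> ?L" unfolding Lset_def using uv(1,2) gdist_refl[of "lollipop_E m n" u] gdist_refl[of "lollipop_E m n" v] gdist_adj[of "lollipop_E m n" u v, OF uv(3) ne]
      gdist_adj[of "lollipop_E m n" v u, OF vu ne[symmetric]] by auto
    then have "sum ?g {u,v} \<le> sum ?g ?L" by (rule mono)
    then show ?thesis using True ne by simp
  next
    case False
    then have "(v = u + 1 \<and> u \<ge> m - 1) \<or> (u = v + 1 \<and> v \<ge> m - 1)"
      using uv(3) unfolding lollipop_E_def by auto
    then have "{0,1} \<subseteq> ?L"
    proof
      assume h: "v = u + 1 \<and> u \<ge> m - 1"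
      then show ?thesis using path_edge_L[OF assms, of u n] uv(2) unfolding lollipop_V_def by auto
    next
      assume h: "u = v + 1 \<and> v \<ge> m - 1"
      then show ?thesis using path_edge_L[OF assms, of v n] uv(1) Lset_sym unfolding lollipop_V_def
        by (metis atLeastLessThan_iff)
    qed
    then have "sum ?g {0,1} \<le> sum ?g ?L" by (rule mono)
    then show ?thesis using assms by simp
  qed
qed

lemma lower:
  assumes m3: "m \<ge> 3" and f: "local_resolving_function (lollipop_V m n) (lollipop_E m n) f"
  shows "real m / 2 \<le> (\<Sum>x\<in>lollipop_V m n. f x)"
proof -
  define V where "V = lollipop_V m n"
  define E where "E = lollipop_E m n"
  have nn: "\<And>x. x \<in> V \<Longrightarrow> 0 \<le> f x" using f unfolding local_resolving_function_def V_def by auto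
  have res: "\<And>u v. u \<in> V \<Longrightarrow> v \<in> V \<Longrightarrow> E u v \<Longrightarrow> 1 \<le> (\<Sum>x\<in>Lset V E u v. f x)"
    using f unfolding local_resolving_function_def V_def E_def by auto
  have finL: "\<And>u v. finite (Lset V E u v)" unfolding Lset_def V_def lollipop_V_def by auto
  have adj: "\<And>u x. u < m \<Longrightarrow> x < m \<Longrightarrow> u \<noteq> x \<Longrightarrow> gdist E u x = 1"
  proof -
    fix u x assume "u < m" "x < m" "u \<noteq> x"
    then have "E u x" unfolding E_def lollipop_E_def by auto
    then show "gdist E u x = 1" using gdist_adj[of E u x] \<open>u \<noteq> x\<close> by simp
  qed
  define K where "K = {0..<m-1}"
  define P where "P = (\<Sum>x\<in>{m..<m+n}. f x)"
  have A: "1 \<le> f u + f v" if uv: "u \<in> K" "v \<in> K" "u \<noteq> v" for u v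
  proof -
    define \<sigma> where "\<sigma> = (\<lambda>x::nat. if x = u then v else if x = v then u else x)"
    have sub: "Lset V E u v \<subseteq> {u, v}"
    proof
      fix x assume x: "x \<in> Lset V E u v"
      show "x \<in> {u, v}"
      proof (rule ccontr)
        assume nx: "x \<notin> {u, v}"
        have "gdist E u x = gdist E v x"
        proof (cases "x < m")
          case True then show ?thesis using adj[of u x] adj[of v x] nx uv unfolding K_def by auto
        next
          case False
          have "gdist E (\<sigma> u) (\<sigma> x) = gdist E u x"
            by (rule gdist_aut) (use lol_swap[of u m v n] uv in \<open>auto simp: \<sigma>_def E_def K_def\<close>)
          moreover have "\<sigma> u = v" "\<sigma> x = x" using False uv unfolding \<sigma>_def K_def by auto
          ultimately show ?thesis by simp
        qed
        then show False using x unfolding Lset_def by auto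
      qed
    qed
    have "u \<in> V" "v \<in> V" using uv unfolding K_def V_def lollipop_V_def by auto
    moreover have "E u v" using uv m3 unfolding K_def E_def lollipop_E_def by auto
    ultimately have "1 \<le> (\<Sum>x\<in>Lset V E u v. f x)" using res by blast
    also have "\<dots> \<le> (\<Sum>x\<in>{u,v}. f x)"
      by (rule sum_mono2) (use sub nn \<open>u \<in> V\<close> \<open>v \<in> V\<close> in auto)
    finally show ?thesis using uv by simp
  qed
  have B: "1 \<le> f u + f (m-1) + P" if u: "u \<in> K" for u
  proof -
    let ?S = "insert u (insert (m-1) {m..<m+n})"
    have sub: "Lset V E u (m-1) \<subseteq> ?S"
    proof
      fix x assume x: "x \<in> Lset V E u (m-1)"
      show "x \<in> ?S"
      proof (rule ccontr)
        assume nx: "x \<notin> ?S"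
        then have "x < m" using x unfolding Lset_def V_def lollipop_V_def by auto
        then have "gdist E u x = gdist E (m-1) x" using adj[of u x] adj[of "m-1" x] nx u m3
          unfolding K_def by auto
        then show False using x unfolding Lset_def by auto
      qed
    qed
    have "u \<in> V" "m-1 \<in> V" using u m3 unfolding K_def V_def lollipop_V_def by auto
    moreover have "E u (m-1)" using u m3 unfolding K_def E_def lollipop_E_def by auto
    ultimately have "1 \<le> (\<Sum>x\<in>Lset V E u (m-1). f x)" using res by blast
    also have "\<dots> \<le> (\<Sum>x\<in>?S. f x)"
      by (rule sum_mono2) (use sub nn \<open>u \<in> V\<close> \<open>m-1 \<in> V\<close> in \<open>auto simp: V_def lollipop_V_def\<close>)
    also have "\<dots> = f u + f (m-1) + P"
    proof -
      have h1: "u \<notin> insert (m-1) {m..<m+n}" "m - 1 \<notin> {m..<m+n}" using u m3 unfolding K_def by auto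
      show ?thesis unfolding P_def using h1 by (simp add: sum.insert_if)
    qed
    finally show ?thesis .
  qed
  have Kne: "K \<noteq> {}" "finite K" using m3 unfolding K_def by auto
  define a where "a = Min (f ` K)"
  have "a \<in> f ` K" unfolding a_def using Kne by (intro Min_in) auto
  then obtain u0 where u0: "u0 \<in> K" "f u0 = a" by auto
  have amin: "\<And>u. u \<in> K \<Longrightarrow> a \<le> f u" unfolding a_def using Kne by auto
  have half: "1/2 \<le> f u" if "u \<in> K - {u0}" for u
    using A[of u0 u] amin[of u] u0 that by auto
  have "(\<Sum>x\<in>K - {u0}. (1/2::real)) \<le> (\<Sum>x\<in>K - {u0}. f x)"
    by (rule sum_mono) (rule half)
  moreover have "card (K - {u0}) = m - 2" using u0 m3 unfolding K_def by simp
  ultimately have S2: "real (m-2) / 2 \<le> (\<Sum>x\<in>K - {u0}. f x)" by simp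
  have sumK: "(\<Sum>x\<in>K. f x) = f u0 + (\<Sum>x\<in>K - {u0}. f x)"
    using Kne u0 by (simp add: sum.remove)
  have V: "V = K \<union> insert (m-1) {m..<m+n}" using m3 unfolding V_def K_def lollipop_V_def by auto
  have "(\<Sum>x\<in>V. f x) = (\<Sum>x\<in>K. f x) + (f (m-1) + P)"
    unfolding V P_def using m3 by (subst sum.union_disjoint) (auto simp: K_def)
  then have "(\<Sum>x\<in>V. f x) \<ge> real (m-2)/2 + 1" using S2 sumK B[OF u0(1)] by linarith
  moreover have "real (m-2)/2 + 1 = real m / 2" using m3 by (simp add: of_nat_diff field_simps)
  ultimately show ?thesis unfolding V_def by linarith
qed

theorem corollary2p6:
  fixes m n :: nat
  assumes "m \<ge> 3" and "n \<ge> 2"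
  shows "ldim_f (lollipop_V m n) (lollipop_E m n) = real m / 2"
  unfolding ldim_f_def
proof (rule cInf_eq_minimum)
  have "(\<Sum>x\<in>lollipop_V m n. (if x < m then 1/2 else 0::real)) = (\<Sum>x\<in>{0..<m}. 1/2)"
    unfolding lollipop_V_def by (rule sum.mono_neutral_cong_right) auto
  then have "(\<Sum>x\<in>lollipop_V m n. (if x < m then 1/2 else 0::real)) = real m / 2" by simp
  then show "real m / 2 \<in> {\<Sum>x\<in>lollipop_V m n. f x |f. local_resolving_function (lollipop_V m n) (lollipop_E m n) f}"
    using upper[OF assms(1), of n] by force
next
  fix x assume "x \<in> {\<Sum>x\<in>lollipop_V m n. f x |f. local_resolving_function (lollipop_V m n) (lollipop_E m n) f}"
  then show "real m / 2 \<le> x" using lower[OF assms(1)] by auto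
qed

end
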